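(* Every cograph has an hc-coloring.
   Context: All graphs are finite, simple and undirected. A (proper vertex) coloring of $G=(V,E)$ is a surjective map $\sigma:V\to S$ with $\sigma(x)\neq\sigma(y)$ whenever $xy\in E$. A cograph is a graph that is $K_1$, or a disjoint union of cographs, or a join of cographs. A cotree $(T,t)$ of a cograph $G$ is a rooted tree $T$ with leaf set $V$ and a labeling $t:V^0(T)\to\{0,1\}$ of its inner vertices such that for every inner vertex $u$, $G(u):=G[L(T(u))]$ (with $L(T(u))$ the leaves descending from $u$) is the disjoint union (if $t(u)=0$) or the join (if $t(u)=1$) of the graphs $G(v)$, $v$ a child of $u$. It is binary if every inner vertex has exactly two children. A coloring $\sigma$ is an hc-coloring with respect to a binary cotree $(T,t)$ if for every inner vertex $u$ with children $v_1,v_2$: if $t(u)=1$ then $\sigma(L(T(v_1)))\cap\sigma(L(T(v_2)))=\emptyset$, and if $t(u)=0$ then one of $\sigma(L(T(v_1)))$, $\sigma(L(T(v_2)))$ contains the other. A coloring of a cograph $G$ is an hc-coloring of $G$ if it is an hc-coloring with respect to some binary cotree of $G$. *)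

theory Defs
  imports Main
begin

text \<open>Graphs are given by a vertex set V and an edge set E of 2-element sets.\<close>

inductive cograph :: "'a set \<Rightarrow> 'a set set \<Rightarrow> bool" where
  single: "cograph {v} {}"
| union: "cograph V1 E1 \<Longrightarrow> cograph V2 E2 \<Longrightarrow> V1 \<inter> V2 = {} \<Longrightarrow>
            cograph (V1 \<union> V2) (E1 \<union> E2)"
| join: "cograph V1 E1 \<Longrightarrow> cograph V2 E2 \<Longrightarrow> V1 \<inter> V2 = {} \<Longrightarrow>
            cograph (V1 \<union> V2) (E1 \<union> E2 \<union> {{x, y} | x y. x \<in> V1 \<and> y \<in> V2})"

text \<open>Binary rooted trees with leaves labelled by vertices and inner vertices
  labelled by bool (True = 1 = join, False = 0 = disjoint union).\<close>

datatype 'a bcotree = Lf 'a | Nd bool "'a bcotree" "'a bcotree"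

fun leaf_list :: "'a bcotree \<Rightarrow> 'a list" where
  "leaf_list (Lf x) = [x]"
| "leaf_list (Nd t l r) = leaf_list l @ leaf_list r"

definition leaves :: "'a bcotree \<Rightarrow> 'a set" where
  "leaves T = set (leaf_list T)"

fun cotree_ok :: "'a set set \<Rightarrow> 'a bcotree \<Rightarrow> bool" where
  "cotree_ok E (Lf x) = True"
| "cotree_ok E (Nd t l r) \<longleftrightarrow> cotree_ok E l \<and> cotree_ok E r \<and>
     (\<forall>x\<in>leaves l. \<forall>y\<in>leaves r. ({x, y} \<in> E \<longleftrightarrow> t))"

definition binary_cotree_of :: "'a set \<Rightarrow> 'a set set \<Rightarrow> 'a bcotree \<Rightarrow> bool" where
  "binary_cotree_of V E T \<longleftrightarrow> distinct (leaf_list T) \<and> leaves T = V \<and> cotree_ok E T"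

definition coloring :: "'a set \<Rightarrow> 'a set set \<Rightarrow> ('a \<Rightarrow> 'c) \<Rightarrow> 'c set \<Rightarrow> bool" where
  "coloring V E \<sigma> S \<longleftrightarrow> \<sigma> ` V = S \<and> (\<forall>x\<in>V. \<forall>y\<in>V. {x, y} \<in> E \<longrightarrow> \<sigma> x \<noteq> \<sigma> y)"

fun hc_wrt :: "('a \<Rightarrow> 'c) \<Rightarrow> 'a bcotree \<Rightarrow> bool" where
  "hc_wrt \<sigma> (Lf x) = True"
| "hc_wrt \<sigma> (Nd t l r) \<longleftrightarrow> hc_wrt \<sigma> l \<and> hc_wrt \<sigma> r \<and>
     (if t then \<sigma> ` leaves l \<inter> \<sigma> ` leaves r = {}
      else (\<sigma> ` leaves l \<subseteq> \<sigma> ` leaves r \<or> \<sigma> ` leaves r \<subseteq> \<sigma> ` leaves l))"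

definition hc_coloring :: "'a set \<Rightarrow> 'a set set \<Rightarrow> ('a \<Rightarrow> 'c) \<Rightarrow> 'c set \<Rightarrow> bool" where
  "hc_coloring V E \<sigma> S \<longleftrightarrow> coloring V E \<sigma> S \<and> (\<exists>T. binary_cotree_of V E T \<and> hc_wrt \<sigma> T)"

end

theory Submission
  imports Defs
begin

lemma leaves_Lf[simp]: "leaves (Lf x) = {x}" by (simp add: leaves_def)
lemma leaves_Nd[simp]: "leaves (Nd t l r) = leaves l \<union> leaves r" by (simp add: leaves_def)

lemma hc_wrt_cong: "(\<forall>x\<in>leaves T. \<sigma> x = \<tau> x) \<Longrightarrow> hc_wrt \<sigma> T = hc_wrt \<tau> T"
proof (induction T)
  case (Lf x) then show ?case by simp
next
  case (Nd t l r)
  have "\<sigma> ` leaves l = \<tau> ` leaves l" "\<sigma> ` leaves r = \<tau> ` leaves r"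
    using Nd.prems by (auto intro!: image_cong)
  then show ?case using Nd by simp
qed

lemma hc_wrt_inj: "inj f \<Longrightarrow> hc_wrt (\<lambda>x. f (\<sigma> x)) T = hc_wrt \<sigma> T"
proof (induction T)
  case (Lf x) then show ?case by simp
next
  case (Nd t l r)
  have i: "(\<lambda>x. f (\<sigma> x)) ` A = f ` (\<sigma> ` A)" for A by auto
  show ?case using Nd
    by (simp add: i image_Int[symmetric] inj_image_subset_iff)
qed

lemma cotree_ok_mono:
  "cotree_ok E T \<Longrightarrow> leaves T \<subseteq> W \<Longrightarrow> (\<forall>x\<in>W. \<forall>y\<in>W. {x,y}\<in>E' \<longleftrightarrow> {x,y}\<in>E) \<Longrightarrow> cotree_ok E' T"
proof (induction T)
  case (Lf x) then show ?case by simp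
next
  case (Nd t l r)
  then show ?case by (simp; blast)
qed

lemma edge_sub: "\<forall>e\<in>E. \<exists>a b. e = {a,b} \<and> a \<noteq> b \<and> a \<in> V \<and> b \<in> V \<Longrightarrow> {x,y}\<in>E \<Longrightarrow> x \<in> V \<and> y \<in> V"
proof -
  assume E: "\<forall>e\<in>E. \<exists>a b. e = {a,b} \<and> a \<noteq> b \<and> a \<in> V \<and> b \<in> V" and xy: "{x,y}\<in>E"
  then obtain a b where "{x,y} = {a,b}" "a \<in> V" "b \<in> V" by blast
  then show ?thesis by (auto simp: doubleton_eq_iff)
qed

lemma main:
  assumes "cograph V E"
  shows "(\<forall>e\<in>E. \<exists>x y. e = {x,y} \<and> x \<noteq> y \<and> x \<in> V \<and> y \<in> V) \<and>
    (\<exists>(\<sigma>::'a\<Rightarrow>nat) k T. \<sigma> ` V = {0..<k} \<and> (\<forall>x\<in>V. \<forall>y\<in>V. {x, y} \<in> E \<longrightarrow> \<sigma> x \<noteq> \<sigma> y)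
       \<and> binary_cotree_of V E T \<and> hc_wrt \<sigma> T)"
  using assms
proof (induction rule: cograph.induct)
  case (single v)
  show ?case
    by (rule conjI, simp, rule exI[of _ "\<lambda>_. 0"], rule exI[of _ 1], rule exI[of _ "Lf v"])
       (simp add: binary_cotree_of_def leaves_def)
next
  case (union V1 E1 V2 E2)
  obtain \<sigma>1 :: "'a \<Rightarrow> nat" and k1 T1 where A: "\<sigma>1 ` V1 = {0..<k1}"
    "\<forall>x\<in>V1. \<forall>y\<in>V1. {x, y} \<in> E1 \<longrightarrow> \<sigma>1 x \<noteq> \<sigma>1 y" "binary_cotree_of V1 E1 T1" "hc_wrt \<sigma>1 T1"
    using conjunct2[OF union.IH(1)] by blast
  obtain \<sigma>2 :: "'a \<Rightarrow> nat" and k2 T2 where B: "\<sigma>2 ` V2 = {0..<k2}"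
    "\<forall>x\<in>V2. \<forall>y\<in>V2. {x, y} \<in> E2 \<longrightarrow> \<sigma>2 x \<noteq> \<sigma>2 y" "binary_cotree_of V2 E2 T2" "hc_wrt \<sigma>2 T2"
    using conjunct2[OF union.IH(2)] by blast
  have E1: "\<forall>e\<in>E1. \<exists>x y. e = {x,y} \<and> x \<noteq> y \<and> x \<in> V1 \<and> y \<in> V1" using conjunct1[OF union.IH(1)] .
  have E2: "\<forall>e\<in>E2. \<exists>x y. e = {x,y} \<and> x \<noteq> y \<and> x \<in> V2 \<and> y \<in> V2" using conjunct1[OF union.IH(2)] .
  have sub1: "{x,y} \<in> E1 \<Longrightarrow> x \<in> V1 \<and> y \<in> V1" for x y
    using edge_sub[OF E1] by blast
  have sub2: "{x,y} \<in> E2 \<Longrightarrow> x \<in> V2 \<and> y \<in> V2" for x y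
    using edge_sub[OF E2] by blast
  define \<sigma> where "\<sigma> x = (if x \<in> V1 then \<sigma>1 x else \<sigma>2 x)" for x
  define T where "T = Nd False T1 T2"
  have l1: "leaves T1 = V1" and l2: "leaves T2 = V2" using A(3) B(3) by (auto simp: binary_cotree_of_def)
  have "\<sigma> ` (V1 \<union> V2) = {0..<max k1 k2}"
  proof -
    have "\<sigma> ` (V1 \<union> V2) = \<sigma>1 ` V1 \<union> \<sigma>2 ` V2" using union.hyps(3) by (auto simp: \<sigma>_def image_def)
    then show ?thesis using A(1) B(1) by auto
  qed
  moreover have "\<forall>x\<in>V1 \<union> V2. \<forall>y\<in>V1 \<union> V2. {x, y} \<in> E1 \<union> E2 \<longrightarrow> \<sigma> x \<noteq> \<sigma> y"
    using A(2) B(2) sub1 sub2 union.hyps(3) by (auto simp: \<sigma>_def)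
  moreover have "binary_cotree_of (V1 \<union> V2) (E1 \<union> E2) T"
  proof -
    have c1: "cotree_ok (E1 \<union> E2) T1"
      by (rule cotree_ok_mono[where W=V1 and E=E1]) (use A(3) l1 sub2 union.hyps(3) in \<open>auto simp: binary_cotree_of_def\<close>)
    have c2: "cotree_ok (E1 \<union> E2) T2"
      by (rule cotree_ok_mono[where W=V2 and E=E2]) (use B(3) l2 sub1 union.hyps(3) in \<open>auto simp: binary_cotree_of_def\<close>)
    show ?thesis using c1 c2 A(3) B(3) l1 l2 sub1 sub2 union.hyps(3)
      by (auto simp: binary_cotree_of_def T_def leaves_def)
  qed
  moreover have "hc_wrt \<sigma> T"
  proof -
    have h1: "hc_wrt \<sigma> T1" using hc_wrt_cong[of T1 \<sigma> \<sigma>1] A(4) l1 by (simp add: \<sigma>_def)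
    have "\<forall>x\<in>leaves T2. \<sigma> x = \<sigma>2 x" using l2 union.hyps(3) by (auto simp: \<sigma>_def)
    then have h2: "hc_wrt \<sigma> T2" using hc_wrt_cong[of T2 \<sigma> \<sigma>2] B(4) by simp
    have "\<sigma> ` V1 = {0..<k1}" using A(1) by (simp add: \<sigma>_def)
    moreover have "\<sigma> ` V2 = {0..<k2}" using B(1) union.hyps(3) by (auto simp: \<sigma>_def image_def)
    ultimately have "\<sigma> ` V1 \<subseteq> \<sigma> ` V2 \<or> \<sigma> ` V2 \<subseteq> \<sigma> ` V1" by (cases "k1 \<le> k2") auto
    then show ?thesis using h1 h2 l1 l2 by (simp add: T_def)
  qed
  moreover have "\<forall>e\<in>E1 \<union> E2. \<exists>x y. e = {x,y} \<and> x \<noteq> y \<and> x \<in> V1 \<union> V2 \<and> y \<in> V1 \<union> V2"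
  proof
    fix e assume "e \<in> E1 \<union> E2"
    then show "\<exists>x y. e = {x,y} \<and> x \<noteq> y \<and> x \<in> V1 \<union> V2 \<and> y \<in> V1 \<union> V2"
    proof (elim UnE)
      assume "e \<in> E1" then obtain x y where "e = {x,y} \<and> x \<noteq> y \<and> x \<in> V1 \<and> y \<in> V1" using E1 by meson
      then show ?thesis by blast
    next
      assume "e \<in> E2" then obtain x y where "e = {x,y} \<and> x \<noteq> y \<and> x \<in> V2 \<and> y \<in> V2" using E2 by meson
      then show ?thesis by blast
    qed
  qed
  ultimately show ?case
    apply -
    apply (intro conjI exI)
        apply assumption+
    done
next
  case (join V1 E1 V2 E2)
  obtain \<sigma>1 :: "'a \<Rightarrow> nat" and k1 T1 where A: "\<sigma>1 ` V1 = {0..<k1}"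
    "\<forall>x\<in>V1. \<forall>y\<in>V1. {x, y} \<in> E1 \<longrightarrow> \<sigma>1 x \<noteq> \<sigma>1 y" "binary_cotree_of V1 E1 T1" "hc_wrt \<sigma>1 T1"
    using conjunct2[OF join.IH(1)] by blast
  obtain \<sigma>2 :: "'a \<Rightarrow> nat" and k2 T2 where B: "\<sigma>2 ` V2 = {0..<k2}"
    "\<forall>x\<in>V2. \<forall>y\<in>V2. {x, y} \<in> E2 \<longrightarrow> \<sigma>2 x \<noteq> \<sigma>2 y" "binary_cotree_of V2 E2 T2" "hc_wrt \<sigma>2 T2"
    using conjunct2[OF join.IH(2)] by blast
  have E1: "\<forall>e\<in>E1. \<exists>x y. e = {x,y} \<and> x \<noteq> y \<and> x \<in> V1 \<and> y \<in> V1" using conjunct1[OF join.IH(1)] .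
  have E2: "\<forall>e\<in>E2. \<exists>x y. e = {x,y} \<and> x \<noteq> y \<and> x \<in> V2 \<and> y \<in> V2" using conjunct1[OF join.IH(2)] .
  have sub1: "{x,y} \<in> E1 \<Longrightarrow> x \<in> V1 \<and> y \<in> V1" for x y
    using edge_sub[OF E1] by blast
  have sub2: "{x,y} \<in> E2 \<Longrightarrow> x \<in> V2 \<and> y \<in> V2" for x y
    using edge_sub[OF E2] by blast
  let ?J = "{{x, y} | x y. x \<in> V1 \<and> y \<in> V2}"
  let ?E = "E1 \<union> E2 \<union> ?J"
  have subJ: "{x,y} \<in> ?J \<Longrightarrow> (x \<in> V1 \<and> y \<in> V2) \<or> (x \<in> V2 \<and> y \<in> V1)" for x y
    by (auto simp: doubleton_eq_iff)
  define \<sigma> where "\<sigma> x = (if x \<in> V1 then \<sigma>1 x else k1 + \<sigma>2 x)" for x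
  define T where "T = Nd True T1 T2"
  have l1: "leaves T1 = V1" and l2: "leaves T2 = V2" using A(3) B(3) by (auto simp: binary_cotree_of_def)
  have s1: "\<sigma> ` V1 = {0..<k1}" using A(1) by (simp add: \<sigma>_def)
  have s2: "\<sigma> ` V2 = (\<lambda>x. k1 + x) ` {0..<k2}"
  proof -
    have "\<sigma> ` V2 = (\<lambda>x. k1 + \<sigma>2 x) ` V2"
      by (rule image_cong) (use join.hyps(3) in \<open>auto simp: \<sigma>_def\<close>)
    also have "\<dots> = (\<lambda>x. k1 + x) ` (\<sigma>2 ` V2)" by (simp add: image_image)
    finally show ?thesis using B(1) by simp
  qed
  have s2': "\<sigma> ` V2 = {k1..<k1+k2}" unfolding s2 by (simp add: image_add_atLeastLessThan add.commute)
  have "\<sigma> ` (V1 \<union> V2) = {0..<k1+k2}" using s1 s2' by (auto simp: image_Un)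
  moreover have "\<forall>x\<in>V1 \<union> V2. \<forall>y\<in>V1 \<union> V2. {x, y} \<in> ?E \<longrightarrow> \<sigma> x \<noteq> \<sigma> y"
  proof (intro ballI impI)
    fix x y assume xy: "x \<in> V1 \<union> V2" "y \<in> V1 \<union> V2" "{x,y} \<in> ?E"
    have lt1: "\<sigma> x \<in> {0..<k1}" if "x \<in> V1" for x using s1 that by blast
    have lt2: "\<sigma> x \<in> {k1..<k1+k2}" if "x \<in> V2" for x using s2' that by blast
    have d: "V1 \<inter> V2 = {}" by fact
    consider "x \<in> V1" "y \<in> V1" | "x \<in> V2" "y \<in> V2" | "x \<in> V1" "y \<in> V2" | "x \<in> V2" "y \<in> V1"
      using xy(1,2) by blast
    then show "\<sigma> x \<noteq> \<sigma> y"
    proof cases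
      case 1
      then have "x \<notin> V2" "y \<notin> V2" using d by auto
      then have "{x,y} \<in> E1" using xy(3) sub2 subJ 1 by blast
      then show ?thesis using A(2) 1 by (simp add: \<sigma>_def)
    next
      case 2
      then have "x \<notin> V1" "y \<notin> V1" using d by auto
      then have "{x,y} \<in> E2" using xy(3) sub1 subJ 2 by blast
      then show ?thesis using B(2) 2 \<open>x \<notin> V1\<close> \<open>y \<notin> V1\<close> by (simp add: \<sigma>_def)
    next
      case 3
      then have "\<sigma> x < k1" "k1 \<le> \<sigma> y" using lt1[OF 3(1)] lt2[OF 3(2)] by auto
      then show ?thesis by simp
    next
      case 4
      then have "\<sigma> y < k1" "k1 \<le> \<sigma> x" using lt1[OF 4(2)] lt2[OF 4(1)] by auto
      then show ?thesis by simp
    qed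
  qed
  moreover have "binary_cotree_of (V1 \<union> V2) ?E T"
  proof -
    have c1: "cotree_ok ?E T1"
    proof (rule cotree_ok_mono[where W=V1 and E=E1])
      show "cotree_ok E1 T1" "leaves T1 \<subseteq> V1" using A(3) l1 by (auto simp: binary_cotree_of_def)
      show "\<forall>x\<in>V1. \<forall>y\<in>V1. {x, y} \<in> ?E \<longleftrightarrow> {x, y} \<in> E1"
      proof (intro ballI)
        fix x y assume xy: "x \<in> V1" "y \<in> V1"
        then have "x \<notin> V2" "y \<notin> V2" using join.hyps(3) by blast+
        then have "{x,y} \<notin> E2" "{x,y} \<notin> ?J" using sub2[of x y] subJ[of x y] xy by blast+
        then show "{x, y} \<in> ?E \<longleftrightarrow> {x, y} \<in> E1" by blast
      qed
    qed
    have c2: "cotree_ok ?E T2"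
    proof (rule cotree_ok_mono[where W=V2 and E=E2])
      show "cotree_ok E2 T2" "leaves T2 \<subseteq> V2" using B(3) l2 by (auto simp: binary_cotree_of_def)
      show "\<forall>x\<in>V2. \<forall>y\<in>V2. {x, y} \<in> ?E \<longleftrightarrow> {x, y} \<in> E2"
      proof (intro ballI)
        fix x y assume xy: "x \<in> V2" "y \<in> V2"
        then have "x \<notin> V1" "y \<notin> V1" using join.hyps(3) by blast+
        then have "{x,y} \<notin> E1" "{x,y} \<notin> ?J" using sub1[of x y] subJ[of x y] xy by blast+
        then show "{x, y} \<in> ?E \<longleftrightarrow> {x, y} \<in> E2" by blast
      qed
    qed
    show ?thesis using c1 c2 A(3) B(3) l1 l2 join.hyps(3)
      by (auto simp: binary_cotree_of_def T_def leaves_def)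
  qed
  moreover have "hc_wrt \<sigma> T"
  proof -
    have h1: "hc_wrt \<sigma> T1" using hc_wrt_cong[of T1 \<sigma> \<sigma>1] A(4) l1 by (simp add: \<sigma>_def)
    have "hc_wrt \<sigma> T2 = hc_wrt (\<lambda>x. k1 + \<sigma>2 x) T2"
    proof -
      have "\<forall>x\<in>leaves T2. \<sigma> x = k1 + \<sigma>2 x" using l2 join.hyps(3) by (auto simp: \<sigma>_def)
      then show ?thesis by (rule hc_wrt_cong)
    qed
    also have "\<dots> = hc_wrt \<sigma>2 T2" by (rule hc_wrt_inj) (simp add: inj_def)
    finally have h2: "hc_wrt \<sigma> T2" using B(4) by simp
    have "\<sigma> ` V1 \<inter> \<sigma> ` V2 = {}" using s1 s2' by auto
    then show ?thesis using h1 h2 l1 l2 by (simp add: T_def)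
  qed
  moreover have "\<forall>e\<in>?E. \<exists>x y. e = {x,y} \<and> x \<noteq> y \<and> x \<in> V1 \<union> V2 \<and> y \<in> V1 \<union> V2"
  proof
    fix e assume "e \<in> ?E"
    then show "\<exists>x y. e = {x,y} \<and> x \<noteq> y \<and> x \<in> V1 \<union> V2 \<and> y \<in> V1 \<union> V2"
    proof (elim UnE)
      assume "e \<in> ?J"
      then obtain x y where "e = {x,y}" "x \<in> V1" "y \<in> V2" by blast
      then show ?thesis using join.hyps(3) by blast
    next
      assume "e \<in> E1" then obtain x y where "e = {x,y} \<and> x \<noteq> y \<and> x \<in> V1 \<and> y \<in> V1" using E1 by meson
      then show ?thesis by blast
    next
      assume "e \<in> E2" then obtain x y where "e = {x,y} \<and> x \<noteq> y \<and> x \<in> V2 \<and> y \<in> V2" using E2 by meson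
      then show ?thesis by blast
    qed
  qed
  ultimately show ?case
    apply -
    apply (intro conjI exI)
        apply assumption+
    done
qed

theorem corollary6:
  fixes V :: "'a set" and E :: "'a set set"
  assumes "cograph V E"
  shows "\<exists>(\<sigma> :: 'a \<Rightarrow> nat) S. hc_coloring V E \<sigma> S"
  using main[OF assms] unfolding hc_coloring_def coloring_def by blast

end
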